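(* Let $N\ge1$, $f:\mathbb{N}^N\to\mathbb{N}$, $k\ge0$ and $\boldsymbol{\ell}=(\ell_1,\dots,\ell_N)\in\mathbb{N}^N$. For $i=1,\dots,N$ let $d_i=\gcd(k,\ell_i)$ and $t_i=k/d_i$. Then $\binom{k}{\boldsymbol{\ell}}_f\equiv0\pmod{t_i}$ for all $i=1,\dots,N$; equivalently, $\binom{k}{\boldsymbol{\ell}}_f\equiv 0\pmod M$, where $M=\operatorname{lcm}(t_1,\dots,t_N)$ (i.e. $M=p_1^{m_1}\cdots p_R^{m_R}$ where $t_i=p_1^{(a_i)_1}\cdots p_R^{(a_i)_R}$ and $m_j=\max_i (a_i)_j$).
   Context: $\mathbb{N}=\{0,1,2,\dots\}$. For $k\ge0$ and $\mathbf{x}\in\mathbb{N}^N$, $\binom{k}{\mathbf{x}}_f=\sum_{\mathbf{m}_1+\cdots+\mathbf{m}_k=\mathbf{x}} f(\mathbf{m}_1)\cdots f(\mathbf{m}_k)$ over tuples of vectors in $\mathbb{N}^N$. *)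

theory Defs
  imports "HOL-Analysis.Analysis"
begin

text \<open>Generalized multinomial coefficient: sum over k-tuples (m_0,...,m_{k-1}) of vectors
in N^N (encoded as functions nat => nat^'n that vanish from index k on) summing to x,
of the product f(m_0)*...*f(m_{k-1}).\<close>
definition gen_multinom :: "(nat^'n::finite \<Rightarrow> nat) \<Rightarrow> nat \<Rightarrow> nat^'n \<Rightarrow> nat" where
  "gen_multinom f k x =
     (\<Sum>ms \<in> {ms :: nat \<Rightarrow> nat^'n. (\<forall>j\<ge>k. ms j = 0) \<and> (\<Sum>j<k. ms j) = x}.
        \<Prod>j<k. f (ms j))"

end

theory Submission
  imports Defs "HOL-Number_Theory.Cong"
begin

lemma rot_mult:
  fixes rot :: "nat \<Rightarrow> 'a \<Rightarrow> 'a"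
  assumes comp: "\<And>a b x. rot a (rot b x) = rot (a+b) x"
    and "rot p x = x" "rot 0 x = x"
  shows "rot (q*p) x = x"
  using assms(2,3) by (induction q) (auto simp: comp[symmetric])

lemma rot_mod:
  fixes rot :: "nat \<Rightarrow> 'a \<Rightarrow> 'a"
  assumes comp: "\<And>a b x. rot a (rot b x) = rot (a+b) x"
    and "rot p x = x" "rot 0 x = x"
  shows "rot n x = rot (n mod p) x"
proof -
  have "rot n x = rot (n mod p) (rot ((n div p)*p) x)"
    by (simp add: comp mod_div_mult_eq)
  also have "\<dots> = rot (n mod p) x" using rot_mult[OF comp assms(2,3)] by simp
  finally show ?thesis .
qed

lemma orbit_dvd_sum:
  fixes g :: "'a \<Rightarrow> nat" and rot :: "nat \<Rightarrow> 'a \<Rightarrow> 'a"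
  assumes fin: "finite S" and kpos: "0 < k"
    and comp: "\<And>a b x. rot a (rot b x) = rot (a+b) x"
    and rk: "\<And>x. x \<in> S \<Longrightarrow> rot k x = x"
    and r0: "\<And>x. x \<in> S \<Longrightarrow> rot 0 x = x"
    and rS: "\<And>x j. x \<in> S \<Longrightarrow> rot j x \<in> S"
    and gr: "\<And>x j. x \<in> S \<Longrightarrow> g (rot j x) = g x"
    and per: "\<And>x p. x \<in> S \<Longrightarrow> 0 < p \<Longrightarrow> p dvd k \<Longrightarrow> rot p x = x \<Longrightarrow> t dvd p"
  shows "t dvd sum g S"
proof -
  have main: "finite T \<Longrightarrow> T \<subseteq> S \<Longrightarrow> (\<forall>x\<in>T. \<forall>j. rot j x \<in> T) \<Longrightarrow> t dvd sum g T" for T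
  proof (induction T rule: finite_psubset_induct)
  case (psubset T)
  show ?case
  proof (cases "T = {}")
    case True then show ?thesis by simp
  next
    case False
    then obtain x where xT: "x \<in> T" by blast
    hence xS: "x \<in> S" using psubset.prems(1) by blast
    define p where "p = (LEAST p. 0 < p \<and> rot p x = x)"
    have ex: "0 < k \<and> rot k x = x" using kpos rk xS by simp
    have pp: "0 < p \<and> rot p x = x" unfolding p_def by (rule LeastI, rule ex)
    have pmin: "\<And>q. 0 < q \<Longrightarrow> rot q x = x \<Longrightarrow> p \<le> q"
      unfolding p_def by (rule Least_le) simp
    have pk: "p \<le> k" using pmin ex by blast
    have x0: "rot 0 x = x" using r0 xS by simp
    have "rot (k mod p) x = x"
      using rot_mod[OF comp, of p x k] pp x0 ex by simp
    hence "k mod p = 0" using pmin[of "k mod p"] pp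
      by (metis mod_less_divisor not_gr0 not_less)
    hence pdk: "p dvd k" by auto
    have tp: "t dvd p" using per[OF xS] pp pdk by blast
    define Orb where "Orb = (\<lambda>j. rot j x) ` {..<p}"
    have inj: "inj_on (\<lambda>j. rot j x) {..<p}"
    proof (rule inj_onI, rule ccontr)
      fix a b assume a: "a \<in> {..<p}" and b: "b \<in> {..<p}" and e: "rot a x = rot b x" and ne: "a \<noteq> b"
      { fix a b assume a: "a < p" and b: "b < p" and e: "rot a x = rot b x" and lt: "a < b"
        have "rot (k - a) (rot a x) = x" using comp ex a pk by simp
        moreover have "rot (k - a) (rot b x) = rot (b - a) x"
        proof -
          have "k - a + b = (b - a) + k" using a b pk lt by simp
          hence "rot (k - a) (rot b x) = rot (b - a) (rot k x)" using comp by metis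
          thus ?thesis using ex by simp
        qed
        ultimately have "rot (b - a) x = x" using e by simp
        hence False using pmin[of "b-a"] lt b by simp
      }
      thus False using a b e ne by (metis lessThan_iff linorder_neqE_nat)
    qed
    have cardOrb: "card Orb = p" unfolding Orb_def using card_image[OF inj] by simp
    have OrbT: "Orb \<subseteq> T" unfolding Orb_def using psubset.prems(2) xT by blast
    have xOrb: "x \<in> Orb" unfolding Orb_def using pp x0 by force
    have sumOrb: "sum g Orb = p * g x"
    proof -
      have "sum g Orb = (\<Sum>j<p. g (rot j x))" unfolding Orb_def using sum.reindex[OF inj] by simp
      also have "\<dots> = p * g x" using gr[OF xS] by simp
      finally show ?thesis .
    qed
    have inv: "\<forall>y\<in>T - Orb. \<forall>j. rot j y \<in> T - Orb"
    proof (intro ballI allI DiffI)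
      fix y j assume y: "y \<in> T - Orb"
      hence yS: "y \<in> S" using psubset.prems(1) by blast
      show "rot j y \<in> T" using y psubset.prems(2) by blast
      show "rot j y \<notin> Orb"
      proof
        assume "rot j y \<in> Orb"
        then obtain i where i: "i < p" "rot j y = rot i x" unfolding Orb_def by auto
        have yy: "rot (k*j - j) (rot j y) = y"
        proof (cases "j = 0")
          case True thus ?thesis using r0 yS by simp
        next
          case False
          have "j \<le> k*j" using kpos by simp
          hence "k*j - j + j = j*k" by (simp add: mult.commute)
          thus ?thesis using comp rot_mult[OF comp, of k y j] rk[OF yS] r0[OF yS] by simp
        qed
        have "y = rot (k*j - j + i) x" using yy i comp by metis
        also have "\<dots> = rot ((k*j - j + i) mod p) x" using rot_mod[OF comp, of p x] pp x0 by blast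
        finally have "y \<in> Orb" unfolding Orb_def using pp by auto
        thus False using y by simp
      qed
    qed
    have "t dvd sum g (T - Orb)"
      using psubset.IH[of "T - Orb"] xOrb OrbT xT inv psubset.prems(1) by blast
    moreover have "sum g T = sum g Orb + sum g (T - Orb)"
      using psubset.hyps OrbT by (metis add.commute sum.subset_diff)
    ultimately show ?thesis using sumOrb tp by simp
  qed
  qed
  show ?thesis using main[OF fin] rS by blast
qed

lemma shift_bij:
  assumes "0 < (k::nat)"
  shows "bij_betw (\<lambda>i. (i+j) mod k) {..<k} {..<k}"
proof -
  have inj: "inj_on (\<lambda>i. (i+j) mod k) {..<k}"
  proof (rule inj_onI)
    fix a b assume a: "a \<in> {..<k}" and b: "b \<in> {..<k}" and e: "(a+j) mod k = (b+j) mod k"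
    have "[a + j = b + j] (mod k)" using e by (simp add: cong_def)
    hence "[a = b] (mod k)" by (simp add: cong_add_rcancel_nat)
    thus "a = b" using a b by (simp add: cong_def)
  qed
  moreover have "(\<lambda>i. (i+j) mod k) ` {..<k} = {..<k}"
    by (rule endo_inj_surj) (use inj assms in auto)
  ultimately show ?thesis by (simp add: bij_betw_def)
qed

lemma block_sum:
  fixes h :: "nat \<Rightarrow> nat"
  shows "(\<Sum>j<q*p. h (j mod p)) = q * (\<Sum>j<p. h j)"
proof -
  have "(\<Sum>j<q*p. h (j mod p)) = (\<Sum>m<q. \<Sum>j\<in>{m*p..<m*p+p}. h (j mod p))"
    by (rule sum.nat_group[symmetric])
  also have "\<dots> = (\<Sum>m<q. \<Sum>j<p. h j)"
  proof (rule sum.cong[OF refl])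
    fix m
    have "(\<Sum>j\<in>{m*p..<m*p+p}. h (j mod p)) = (\<Sum>j\<in>{0+m*p..<p+m*p}. h (j mod p))"
      by (simp add: add.commute)
    also have "\<dots> = (\<Sum>j=0..<p. h ((j + m*p) mod p))"
      by (rule sum.shift_bounds_nat_ivl)
    also have "\<dots> = (\<Sum>j<p. h j)" by (simp add: atLeast0LessThan)
    finally show "(\<Sum>j\<in>{m*p..<m*p+p}. h (j mod p)) = (\<Sum>j<p. h j)" .
  qed
  also have "\<dots> = q * (\<Sum>j<p. h j)" by simp
  finally show ?thesis .
qed

theorem theorem11:
  fixes f :: "nat^'n::finite \<Rightarrow> nat" and k :: nat and l :: "nat^'n"
  shows "(\<forall>i. gcd k (l$i) \<noteq> 0 \<longrightarrow> (k div gcd k (l$i)) dvd gen_multinom f k l)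
       \<and> Lcm ((\<lambda>i. k div gcd k (l$i)) ` {i. gcd k (l$i) \<noteq> 0}) dvd gen_multinom f k l"
proof (cases "gen_multinom f k l = 0")
  case True thus ?thesis by simp
next
  case nz: False
  define S where "S = {ms :: nat \<Rightarrow> nat^'n. (\<forall>j\<ge>k. ms j = 0) \<and> (\<Sum>j<k. ms j) = l}"
  define g where "g = (\<lambda>ms :: nat \<Rightarrow> nat^'n. \<Prod>j<k. f (ms j))"
  have G: "gen_multinom f k l = sum g S" unfolding gen_multinom_def S_def g_def by simp
  have finS: "finite S" using nz G by (metis sum.infinite)
  show ?thesis
  proof (cases "k = 0")
    case True
    then obtain ms where "ms \<in> S" using nz G by (metis sum.empty ex_in_conv)
    hence "l = 0" using True unfolding S_def by simp
    thus ?thesis using True by simp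
  next
    case False
    hence kpos: "0 < k" by simp
    define rot where "rot = (\<lambda>j (ms :: nat \<Rightarrow> nat^'n) i. if i < k then ms ((i+j) mod k) else 0)"
    have comp: "rot a (rot b x) = rot (a+b) x" for a b x
      unfolding rot_def using kpos by (auto simp: mod_add_left_eq add.assoc)
    have rk: "rot k x = x" if "x \<in> S" for x
      using that unfolding rot_def S_def by (auto simp: fun_eq_iff)
    have r0: "rot 0 x = x" if "x \<in> S" for x
      using that unfolding rot_def S_def by (auto simp: fun_eq_iff)
    have sumrot: "(\<Sum>i<k. h ((i+j) mod k)) = (\<Sum>i<k. h i)" for h :: "nat \<Rightarrow> nat^'n" and j
      using sum.reindex_bij_betw[OF shift_bij[OF kpos, of j], of h] by simp
    have prodrot: "(\<Prod>i<k. h ((i+j) mod k)) = (\<Prod>i<k. h i)" for h :: "nat \<Rightarrow> nat" and j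
      using prod.reindex_bij_betw[OF shift_bij[OF kpos, of j], of h] by simp
    have rS: "rot j x \<in> S" if "x \<in> S" for x j
    proof -
      have "(\<Sum>i<k. rot j x i) = (\<Sum>i<k. x ((i+j) mod k))" unfolding rot_def by simp
      also have "\<dots> = l" using sumrot[of x j] that unfolding S_def by simp
      finally show ?thesis unfolding S_def by (simp add: rot_def)
    qed
    have gr: "g (rot j x) = g x" if "x \<in> S" for x j
    proof -
      have "g (rot j x) = (\<Prod>i<k. f (x ((i+j) mod k)))" unfolding g_def rot_def by simp
      also have "\<dots> = g x" unfolding g_def using prodrot[of "\<lambda>i. f (x i)" j] by simp
      finally show ?thesis .
    qed
    have C: "(k div gcd k (l$i)) dvd sum g S" for i
    proof (rule orbit_dvd_sum[where rot=rot and S=S and g=g and k=k])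
      show "finite S" by (rule finS)
      show "0 < k" by (rule kpos)
      show "rot a (rot b x) = rot (a+b) x" for a b x by (rule comp)
      show "x \<in> S \<Longrightarrow> rot k x = x" for x by (rule rk)
      show "x \<in> S \<Longrightarrow> rot 0 x = x" for x by (rule r0)
      show "x \<in> S \<Longrightarrow> rot j x \<in> S" for x j by (rule rS)
      show "x \<in> S \<Longrightarrow> g (rot j x) = g x" for x j by (rule gr)
    next
      fix ms p assume ms: "ms \<in> S" and p0: "0 < p" and pk: "p dvd k" and rp: "rot p ms = ms"
      have step: "ms ((i'+p) mod k) = ms i'" if "i' < k" for i'
        using fun_cong[OF rp, of i'] that unfolding rot_def by simp
      have per: "ms i' = ms (i' mod p)" if "i' < k" for i'
        using that
      proof (induction i' rule: less_induct)
        case (less i')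
        show ?case
        proof (cases "i' < p")
          case True thus ?thesis by simp
        next
          case False
          hence "i' - p < k" "i' - p < i'" using less.prems p0 by auto
          hence "ms (i' - p) = ms ((i'-p) mod p)" using less.IH by blast
          moreover have "ms ((i' - p + p) mod k) = ms (i' - p)" using step \<open>i' - p < k\<close> by blast
          moreover have "(i' - p) mod p = i' mod p" using False by (simp add: mod_if)
          ultimately show ?thesis using False less.prems by simp
        qed
      qed
      define q where "q = k div p"
      have kq: "k = q * p" using pk unfolding q_def by simp
      have q0: "0 < q" using kq kpos by (cases q) auto
      have "l $ i = (\<Sum>j<k. ms j $ i)" using ms unfolding S_def by (auto simp: sum_component)
      also have "\<dots> = (\<Sum>j<q*p. ms (j mod p) $ i)" using per kq by (intro sum.cong) auto
      also have "\<dots> = q * (\<Sum>j<p. ms j $ i)" by (rule block_sum)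
      finally have "q dvd l $ i" by simp
      moreover have "q dvd k" using kq by simp
      ultimately have "q dvd gcd k (l$i)" by simp
      then obtain c where dc: "gcd k (l$i) = q * c" by (elim dvdE)
      obtain d where d_def: "d = gcd k (l$i)" by simp
      obtain t where t_def: "t = k div d" by simp
      have "k = d * t" unfolding d_def t_def by simp
      hence "q * p = q * (c * t)" using kq dc d_def by (simp add: mult.assoc)
      hence "p = c * t" using q0 by simp
      thus "k div gcd k (l$i) dvd p" using d_def t_def by simp
    qed
    show ?thesis using C G by (auto intro: Lcm_least)
  qed
qed
end
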